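(* Let $E/F$ be a quadratic extension of fields of characteristic $0$ and $\beta\in\mathrm{GL}_n(E)$ skew-Hermitian. Suppose $A'\in\mathfrak h_n^\beta(F)$ is regular semisimple and $A'=\bar a a$ for some $a\in\mathrm{GL}_n(E)$. Then $A'=\beta^{-1}\zeta^*\beta\zeta$ for some $\zeta\in\mathrm{GL}_n(E)$.
   Context: $x\mapsto\bar x$ is the nontrivial automorphism of $E/F$ (entrywise on matrices), $g^*={}^t\bar g$, $\beta^*=-\beta$. $\mathfrak h_n^\beta(F)$ is the set of $A'\in\mathrm{Mat}_n(E)$ with $A'^*=\beta A'\beta^{-1}$. *)

theory Defs
  imports "Jordan_Normal_Form.Char_Poly" "HOL-Computational_Algebra.Polynomial"
begin

text \<open>The quadratic extension E/F is modelled by a field type 'e of characteristic 0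
together with its nontrivial F-automorphism sigma (x maps to x-bar): sigma is a ring
automorphism of E of order exactly 2, and F is its fixed field.  By Artin's theorem
this is the same as a quadratic extension E/F together with its nontrivial automorphism.\<close>

definition quad_conj :: "('e::field \<Rightarrow> 'e) \<Rightarrow> bool" where
  "quad_conj \<sigma> \<longleftrightarrow>
     (\<forall>x y. \<sigma> (x + y) = \<sigma> x + \<sigma> y) \<and>
     (\<forall>x y. \<sigma> (x * y) = \<sigma> x * \<sigma> y) \<and>
     \<sigma> 1 = 1 \<and>
     (\<forall>x. \<sigma> (\<sigma> x) = x) \<and>
     (\<exists>x. \<sigma> x \<noteq> x)"

definition mbar :: "('e \<Rightarrow> 'e) \<Rightarrow> 'e mat \<Rightarrow> 'e mat" where
  "mbar \<sigma> A = map_mat \<sigma> A"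

definition mstar :: "('e \<Rightarrow> 'e) \<Rightarrow> 'e mat \<Rightarrow> 'e mat" where
  "mstar \<sigma> A = transpose_mat (map_mat \<sigma> A)"

definition GLn :: "nat \<Rightarrow> 'e::field mat set" where
  "GLn n = {A. A \<in> carrier_mat n n \<and> invertible_mat A}"

definition minv :: "nat \<Rightarrow> 'e::field mat \<Rightarrow> 'e mat" where
  "minv n A = (THE B. B \<in> carrier_mat n n \<and> A * B = 1\<^sub>m n \<and> B * A = 1\<^sub>m n)"

definition skew_hermitian :: "('e::field \<Rightarrow> 'e) \<Rightarrow> 'e mat \<Rightarrow> bool" where
  "skew_hermitian \<sigma> \<beta> \<longleftrightarrow> mstar \<sigma> \<beta> = - \<beta>"

definition h_beta :: "('e::field \<Rightarrow> 'e) \<Rightarrow> nat \<Rightarrow> 'e mat \<Rightarrow> 'e mat set" where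
  "h_beta \<sigma> n \<beta> = {A. A \<in> carrier_mat n n \<and> mstar \<sigma> A = \<beta> * A * minv n \<beta>}"

text \<open>Regular semisimple: the characteristic polynomial has n distinct roots over an
algebraic closure, i.e. it is separable (coprime to its derivative).\<close>
definition regular_semisimple :: "'e::field mat \<Rightarrow> bool" where
  "regular_semisimple A \<longleftrightarrow> coprime (char_poly A) (pderiv (char_poly A))"

end

theory Submission
  imports Defs
begin


lemma det_two_cols:
  fixes u v :: "'a::comm_ring_1 vec"
  assumes i: "i < n" and k: "k < n" and ik: "i \<noteq> k"
  shows "det (mat n n (\<lambda>(r,c). if c = i then u$r else if c = k then v$r else (if r = c then 1 else 0)))
     = u$i * v$k - u$k * v$i"
proof -
  define X where "X = mat n n (\<lambda>(r,c). if c = i then u$r else if c = k then v$r else (if r = c then 1 else (0::'a)))"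
  have X: "X \<in> carrier_mat n n" unfolding X_def by simp
  let ?P = "{p. p permutes {0..<n}}"
  let ?g = "\<lambda>p. signof p * (\<Prod>r = 0..<n. X $$ (r, p r)) :: 'a"
  have claim: "p = id \<or> p = Transposition.transpose i k" if p: "p permutes {0..<n}"
      and nz: "(\<Prod>r = 0..<n. X $$ (r, p r)) \<noteq> 0" for p
  proof -
    have nz': "X $$ (r, p r) \<noteq> 0" if "r < n" for r
      using nz that by (metis atLeastLessThan_iff finite_atLeastLessThan prod_zero zero_le)
    have pn: "p r < n" if "r < n" for r using p that by (simp add: permutes_in_image)
    have fx: "p r = r" if "r < n" "p r \<noteq> i" "p r \<noteq> k" for r
      using nz'[OF that(1)] that pn[OF that(1)] unfolding X_def by (auto split: if_splits)
    have inj: "inj p" using p permutes_inj by blast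
    have pi: "p i = i \<or> p i = k"
    proof (rule ccontr)
      assume "\<not> ?thesis"
      hence "p i \<noteq> i" "p i \<noteq> k" by auto
      with fx[OF i] show False by simp
    qed
    have pk: "p k = i \<or> p k = k"
    proof (rule ccontr)
      assume "\<not> ?thesis"
      hence "p k \<noteq> i" "p k \<noteq> k" by auto
      with fx[OF k] show False by simp
    qed
    have cases: "(p i = i \<and> p k = k) \<or> (p i = k \<and> p k = i)"
      using pi pk inj ik by (metis injD)
    have other: "p r = r" if "r \<noteq> i" "r \<noteq> k" for r
    proof (cases "r < n")
      case True
      have "p r \<noteq> i" "p r \<noteq> k" using cases that inj by (metis injD)+
      thus ?thesis using fx[OF True] by simp
    next
      case False
      thus ?thesis using p unfolding permutes_def by auto
    qed
    show ?thesis
    proof (cases "p i = i")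
      case True
      hence "p = id" using cases other by (metis eq_id_iff)
      thus ?thesis by simp
    next
      case False
      hence "p = Transposition.transpose i k" using cases other
        by (auto simp: fun_eq_iff Transposition.transpose_def)
      thus ?thesis by simp
    qed
  qed
  have sub: "{id, Transposition.transpose i k} \<subseteq> ?P"
    using i k by (auto intro: permutes_id permutes_swap_id)
  have "det X = sum ?g ?P" by (rule det_def'[OF X])
  also have "\<dots> = sum ?g {id, Transposition.transpose i k}"
    by (rule sum.mono_neutral_right[OF finite_permutations[OF finite_atLeastLessThan] sub], use claim in force)
  also have "\<dots> = ?g id + ?g (Transposition.transpose i k)"
    using ik by (subst sum.insert, auto simp: fun_eq_iff Transposition.transpose_def split: if_splits)
  also have "?g id = u$i * v$k"
  proof -
    have "(\<Prod>r = 0..<n. X $$ (r, id r)) = (\<Prod>r \<in> {0..<n}. X $$ (r, r))" by simp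
    also have "\<dots> = (\<Prod>r \<in> {i,k}. X $$ (r, r))"
      by (rule prod.mono_neutral_right, simp, use i k in auto, auto simp: X_def split: if_splits)
    also have "\<dots> = u$i * v$k" using ik i k by (simp add: X_def)
    finally show ?thesis by (simp add: sign_id)
  qed
  also have "?g (Transposition.transpose i k) = - (u$k * v$i)"
  proof -
    have "(\<Prod>r = 0..<n. X $$ (r, Transposition.transpose i k r)) = (\<Prod>r \<in> {i,k}. X $$ (r, Transposition.transpose i k r))"
      by (rule prod.mono_neutral_right, simp, use i k in auto, auto simp: X_def Transposition.transpose_def split: if_splits)
    also have "\<dots> = v$i * u$k" using ik i k by (simp add: X_def Transposition.transpose_def)
    finally show ?thesis using ik by (simp add: sign_swap_id)
  qed
  finally show ?thesis unfolding X_def by simp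
qed


lemma jacobi2:
  fixes M :: "'a::idom mat"
  assumes M: "M \<in> carrier_mat n n" and d: "det M \<noteq> 0"
    and i: "i < n" and k: "k < n" and j: "j < n" and l: "l < n"
  shows "det M dvd (adj_mat M $$ (i,j) * adj_mat M $$ (k,l) - adj_mat M $$ (k,j) * adj_mat M $$ (i,l))"
proof (cases "i = k")
  case True thus ?thesis by simp
next
  case ik: False
  define R where "R = adj_mat M"
  define f where "f = det M"
  have R: "R \<in> carrier_mat n n" and MR: "M * R = f \<cdot>\<^sub>m 1\<^sub>m n"
    using adj_mat[OF M] unfolding R_def f_def by auto
  define u where "u = col R j"
  define v where "v = col R l"
  define X where "X = mat n n (\<lambda>(r,c). if c = i then u$r else if c = k then v$r else (if r = c then 1 else (0::'a)))"
  define Z where "Z = mat n n (\<lambda>(r,c). if c = i then (if r = j then 1 else 0) else if c = k then (if r = l then 1 else 0) else M $$ (r,c))"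
  define D where "D = mat n n (\<lambda>(r,c). if r = c then (if r = i \<or> r = k then f else 1) else (0::'a))"
  have detX: "det X = R $$ (i,j) * R $$ (k,l) - R $$ (k,j) * R $$ (i,l)"
    unfolding X_def det_two_cols[OF i k ik] u_def v_def using i j k l R by simp
  have MRe: "(\<Sum>s = 0..<n. M $$ (r, s) * R $$ (s, c)) = (if r = c then f else 0)" if "r < n" "c < n" for r c
  proof -
    have "(M * R) $$ (r,c) = (\<Sum>s = 0..<n. M $$ (r, s) * R $$ (s, c))"
      using M R that by (simp add: scalar_prod_def)
    thus ?thesis using MR that by (auto split: if_splits)
  qed
  have MX: "M * X = Z * D"
  proof (rule eq_matI)
    show "dim_row (M * X) = dim_row (Z * D)" "dim_col (M * X) = dim_col (Z * D)"
      using M by (auto simp: X_def Z_def D_def)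
    fix r c assume r: "r < dim_row (Z * D)" and c: "c < dim_col (Z * D)"
    hence r: "r < n" and c: "c < n" by (auto simp: Z_def D_def)
    have lhs: "(M * X) $$ (r,c) = (\<Sum>s = 0..<n. M $$ (r, s) * X $$ (s, c))"
      using M r c by (simp add: scalar_prod_def X_def)
    have rhs: "(Z * D) $$ (r,c) = (\<Sum>s = 0..<n. Z $$ (r, s) * D $$ (s, c))"
      using r c by (simp add: scalar_prod_def Z_def D_def)
    have rhs2: "(\<Sum>s = 0..<n. Z $$ (r, s) * D $$ (s, c)) = Z $$ (r,c) * D $$ (c,c)"
      using r c by (simp add: D_def Z_def if_distrib cong: if_cong)
    show "(M * X) $$ (r,c) = (Z * D) $$ (r,c)"
      unfolding lhs rhs rhs2
    proof -
      consider "c = i" | "c \<noteq> i" "c = k" | "c \<noteq> i" "c \<noteq> k" by auto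
      thus "(\<Sum>s = 0..<n. M $$ (r, s) * X $$ (s, c)) = Z $$ (r,c) * D $$ (c,c)"
      proof cases
        case 1
        have "(\<Sum>s = 0..<n. M $$ (r, s) * X $$ (s, c)) = (\<Sum>s = 0..<n. M $$ (r, s) * R $$ (s, j))"
          using 1 R j i by (intro sum.cong, auto simp: X_def u_def)
        thus ?thesis using MRe[OF r j] 1 r c by (simp add: Z_def D_def)
      next
        case 2
        have "(\<Sum>s = 0..<n. M $$ (r, s) * X $$ (s, c)) = (\<Sum>s = 0..<n. M $$ (r, s) * R $$ (s, l))"
          using 2 R l k by (intro sum.cong, auto simp: X_def v_def)
        thus ?thesis using MRe[OF r l] 2 r c by (simp add: Z_def D_def)
      next
        case 3
        have "(\<Sum>s = 0..<n. M $$ (r, s) * X $$ (s, c)) = (\<Sum>s = 0..<n. if s = c then M $$ (r, s) else 0)"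
          using 3 c by (intro sum.cong, auto simp: X_def)
        thus ?thesis using 3 r c by (simp add: Z_def D_def)
      qed
    qed
  qed
  have X: "X \<in> carrier_mat n n" and Z: "Z \<in> carrier_mat n n" and D: "D \<in> carrier_mat n n"
    by (auto simp: X_def Z_def D_def)
  have detD: "det D = f * f"
  proof -
    have "upper_triangular D" by (auto simp: upper_triangular_def D_def)
    hence "det D = (\<Prod>r = 0..<n. D $$ (r,r))" using det_upper_triangular[OF _ D] D
      by (simp add: prod_list_diag_prod)
    also have "\<dots> = (\<Prod>r \<in> {i,k}. D $$ (r,r))"
      by (rule prod.mono_neutral_right, simp, use i k in auto, auto simp: D_def split: if_splits)
    also have "\<dots> = f * f" using ik i k by (simp add: D_def)
    finally show ?thesis .
  qed
  have "f * det X = det Z * (f * f)"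
    using arg_cong[OF MX, of det] det_mult[OF M X] det_mult[OF Z D] detD unfolding f_def by simp
  hence "det X = det Z * f" using d unfolding f_def by (simp add: algebra_simps)
  thus ?thesis unfolding detX[symmetric] R_def[symmetric] f_def[symmetric] by simp
qed

lemma mult_entry: "A \<in> carrier_mat n m \<Longrightarrow> B \<in> carrier_mat m p \<Longrightarrow> i < n \<Longrightarrow> j < p \<Longrightarrow>
   (A * B) $$ (i,j) = (\<Sum>c = 0..<m. A $$ (i,c) * B $$ (c,j))"
  by (simp add: scalar_prod_def)

lemma cpm_entry: "A \<in> carrier_mat n n \<Longrightarrow> i < n \<Longrightarrow> j < n \<Longrightarrow>
  char_poly_matrix A $$ (i,j) = (if i = j then [:0,1:] else 0) + [:- A $$ (i,j):]"
  by (simp add: char_poly_matrix_def)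

lemma cpm_delete: assumes A: "A \<in> carrier_mat n n"
  shows "mat_delete (char_poly_matrix A) c c = char_poly_matrix (mat_delete A c c)"
proof (rule eq_matI)
  show "dim_row (mat_delete (char_poly_matrix A) c c) = dim_row (char_poly_matrix (mat_delete A c c))"
       "dim_col (mat_delete (char_poly_matrix A) c c) = dim_col (char_poly_matrix (mat_delete A c c))"
    using A by (auto simp: char_poly_matrix_def)
  fix i j assume "i < dim_row (char_poly_matrix (mat_delete A c c))" "j < dim_col (char_poly_matrix (mat_delete A c c))"
  hence i: "i < n - 1" and j: "j < n - 1" using A by (auto simp: char_poly_matrix_def)
  show "mat_delete (char_poly_matrix A) c c $$ (i, j) = char_poly_matrix (mat_delete A c c) $$ (i, j)"
    using i j A by (auto simp: mat_delete_def char_poly_matrix_def)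
qed

lemma trace_adj_cpm: fixes A :: "'a::idom mat" assumes A: "A \<in> carrier_mat n n"
  shows "(\<Sum>c = 0..<n. adj_mat (char_poly_matrix A) $$ (c,c)) = pderiv (char_poly A)"
proof -
  have "(\<Sum>c = 0..<n. adj_mat (char_poly_matrix A) $$ (c,c)) = (\<Sum>c<n. char_poly (mat_delete A c c))"
  proof (rule sum.cong)
    show "{0..<n} = {..<n}" by auto
    fix c assume "c \<in> {..<n}"
    hence c: "c < n" by auto
    have "adj_mat (char_poly_matrix A) $$ (c,c) = cofactor (char_poly_matrix A) c c"
    proof -
      have d: "dim_row (char_poly_matrix A) = n" "dim_col (char_poly_matrix A) = n"
        using char_poly_matrix_closed[OF A] by auto
      show ?thesis using c unfolding adj_mat_def d by simp
    qed
    also have "\<dots> = det (mat_delete (char_poly_matrix A) c c)"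
      by (simp add: cofactor_def flip: mult_2)
    also have "\<dots> = char_poly (mat_delete A c c)"
      by (simp add: cpm_delete[OF A] char_poly_def)
    finally show "adj_mat (char_poly_matrix A) $$ (c,c) = char_poly (mat_delete A c c)" .
  qed
  also have "\<dots> = pderiv (char_poly A)" by (rule pderiv_char_poly[OF A, symmetric])
  finally show ?thesis .
qed


lemma coprime_poly_dvd:
  fixes f g x :: "'a::field poly"
  assumes cp: "coprime f g" and d: "f dvd g * x"
  shows "f dvd x"
proof (cases "f = 0")
  case True
  hence "is_unit g" using cp by simp
  moreover have "g * x = 0" using d True by simp
  ultimately show ?thesis using True by auto
next
  case False
  define S where "S = {h. h \<noteq> 0 \<and> (\<exists>p q. h = p * f + q * g)}"
  have fS: "f \<in> S" unfolding S_def using False by (auto intro: exI[of _ 1] exI[of _ 0])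
  obtain h where hS: "h \<in> S" and hmin: "\<And>h'. h' \<in> S \<Longrightarrow> degree h \<le> degree h'"
    using ex_has_least_nat[of "\<lambda>h. h \<in> S" f degree] fS by blast
  from hS obtain p q where h: "h = p * f + q * g" and h0: "h \<noteq> 0" unfolding S_def by auto
  have divs: "h dvd y" if y: "\<exists>p q. y = p * f + q * g" for y
  proof (rule ccontr)
    assume nd: "\<not> h dvd y"
    from y obtain p' q' where y': "y = p' * f + q' * g" by auto
    have r0: "y mod h \<noteq> 0" using nd by (simp add: mod_eq_0_iff_dvd)
    have "y mod h = y - (y div h) * h" by (simp add: minus_div_mult_eq_mod)
    also have "\<dots> = (p' - (y div h) * p) * f + (q' - (y div h) * q) * g"
      unfolding y' h by (simp add: algebra_simps)
    finally have "y mod h \<in> S" unfolding S_def using r0 by blast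
    hence "degree h \<le> degree (y mod h)" by (rule hmin)
    moreover have "degree (y mod h) < degree h" using h0 r0 by (rule degree_mod_less')
    ultimately show False by simp
  qed
  have "h dvd f" by (rule divs, rule exI[of _ 1], rule exI[of _ 0], simp)
  moreover have "h dvd g" by (rule divs, rule exI[of _ 0], rule exI[of _ 1], simp)
  ultimately have u: "is_unit h" using cp by (simp add: coprime_def)
  have "x * h = (x * p) * f + q * (g * x)" unfolding h by (simp add: algebra_simps)
  hence "f dvd x * h" using d by (simp add: dvd_add)
  thus ?thesis using u by (simp add: dvd_mult_unit_iff)
qed


lemma sum_const_poly: "(\<Sum>c\<in>S. [:g c:]) = [:\<Sum>c\<in>S. g c:]"
  by (induction S rule: infinite_finite_induct) auto

lemma K_zero:
  fixes A K :: "'a::field_char_0 mat"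
  assumes A: "A \<in> carrier_mat n n" and K: "K \<in> carrier_mat n n"
    and anti: "\<And>i j. i < n \<Longrightarrow> j < n \<Longrightarrow> K $$ (j,i) = - K $$ (i,j)"
    and comm: "\<And>i j. i < n \<Longrightarrow> j < n \<Longrightarrow>
        (\<Sum>c = 0..<n. K $$ (i,c) * A $$ (c,j)) = (\<Sum>c = 0..<n. A $$ (c,i) * K $$ (c,j))"
    and sep: "coprime (char_poly A) (pderiv (char_poly A))"
    and ij: "i < n" "j < n"
  shows "K $$ (i,j) = 0"
proof -
  define M where "M = char_poly_matrix A"
  define R where "R = adj_mat M"
  define f where "f = char_poly A"
  define f' where "f' = pderiv f"
  define KC where "KC = mat n n (\<lambda>(i,j). [:K $$ (i,j):])"
  have M: "M \<in> carrier_mat n n" unfolding M_def using A by simp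
  have R: "R \<in> carrier_mat n n" unfolding R_def using adj_mat[OF M] by simp
  have KC: "KC \<in> carrier_mat n n" unfolding KC_def by simp
  have detM: "det M = f" unfolding M_def f_def char_poly_def ..
  have f0: "f \<noteq> 0" using degree_monic_char_poly[OF A] unfolding f_def by auto
  have MR: "M * R = f \<cdot>\<^sub>m 1\<^sub>m n" and RM: "R * M = f \<cdot>\<^sub>m 1\<^sub>m n"
    using adj_mat[OF M] unfolding R_def detM by auto
  have Ment: "M $$ (i,j) = (if i = j then [:0,1:] else 0) + [:- A $$ (i,j):]" if "i < n" "j < n" for i j
    unfolding M_def using cpm_entry[OF A that] .
  have Rt: "transpose_mat R \<in> carrier_mat n n" and Mt: "transpose_mat M \<in> carrier_mat n n" using R M by auto
  have KCM: "KC * M = transpose_mat M * KC"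
  proof (rule eq_matI)
    fix a b assume "a < dim_row (transpose_mat M * KC)" "b < dim_col (transpose_mat M * KC)"
    hence a: "a < n" and b: "b < n" using M KC by auto
    have "(KC * M) $$ (a,b) = (\<Sum>c = 0..<n. [:K $$ (a,c):] * ((if c = b then [:0,1:] else 0) + [:- A $$ (c,b):]))"
      using a b KC M by (subst mult_entry[OF KC M a b]) (auto simp: Ment KC_def intro!: sum.cong)
    also have "\<dots> = (\<Sum>c = 0..<n. (if c = b then [:0, K $$ (a,c):] else 0) - [:K $$ (a,c) * A $$ (c,b):])"
      by (intro sum.cong, auto)
    also have "\<dots> = [:K $$ (a,b):] * [:0,1:] - [:\<Sum>c = 0..<n. K $$ (a,c) * A $$ (c,b):]"
      using b by (simp add: sum_subtractf sum_const_poly[symmetric])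
    also have "\<dots> = [:K $$ (a,b):] * [:0,1:] - [:\<Sum>c = 0..<n. A $$ (c,a) * K $$ (c,b):]"
      using comm[OF a b] by simp
    also have "\<dots> = (\<Sum>c = 0..<n. (if c = a then [:0, K $$ (c,b):] else 0) - [:A $$ (c,a) * K $$ (c,b):])"
      using a by (simp add: sum_subtractf sum_const_poly[symmetric])
    also have "\<dots> = (\<Sum>c = 0..<n. ((if c = a then [:0,1:] else 0) + [:- A $$ (c,a):]) * [:K $$ (c,b):])"
      by (intro sum.cong, auto)
    also have "\<dots> = (transpose_mat M * KC) $$ (a,b)"
      using a b KC M by (subst mult_entry[OF Mt KC a b]) (auto simp: Ment KC_def intro!: sum.cong)
    finally show "(KC * M) $$ (a,b) = (transpose_mat M * KC) $$ (a,b)" .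
  qed (use M KC in auto)
  have "f \<cdot>\<^sub>m (transpose_mat R * KC) = (transpose_mat R * KC) * (M * R)"
    unfolding MR using mult_smult_distrib[OF mult_carrier_mat[OF Rt KC] one_carrier_mat, of f] Rt KC by simp
  also have "\<dots> = transpose_mat R * (KC * M) * R"
    by (simp only: assoc_mult_mat[OF Rt KC mult_carrier_mat[OF M R]] assoc_mult_mat[OF Rt mult_carrier_mat[OF KC M] R] assoc_mult_mat[OF KC M R])
  also have "\<dots> = (transpose_mat R * transpose_mat M) * (KC * R)" unfolding KCM
    by (simp only: assoc_mult_mat[OF Rt mult_carrier_mat[OF Mt KC] R] assoc_mult_mat[OF Rt Mt mult_carrier_mat[OF KC R]] assoc_mult_mat[OF Mt KC R])
  also have "\<dots> = f \<cdot>\<^sub>m (KC * R)"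
  proof -
    have "transpose_mat (f \<cdot>\<^sub>m 1\<^sub>m n) = f \<cdot>\<^sub>m 1\<^sub>m n" by (rule eq_matI, auto)
    thus ?thesis unfolding transpose_mult[OF M R, symmetric] MR
      using mult_smult_assoc_mat[OF one_carrier_mat mult_carrier_mat[OF KC R], of f] KC R by simp
  qed
  finally have "f \<cdot>\<^sub>m (transpose_mat R * KC) = f \<cdot>\<^sub>m (KC * R)" .
  note eq = this
  have KR: "KC * R = transpose_mat R * KC"
  proof (rule eq_matI)
    fix a b assume "a < dim_row (transpose_mat R * KC)" "b < dim_col (transpose_mat R * KC)"
    hence a: "a < n" and b: "b < n" using Rt KC by auto
    have "f * (KC * R) $$ (a,b) = f * (transpose_mat R * KC) $$ (a,b)"
      using arg_cong[OF eq, of "\<lambda>X. X $$ (a,b)"] a b Rt KC R by (auto simp: ac_simps)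
    thus "(KC * R) $$ (a,b) = (transpose_mat R * KC) $$ (a,b)" using f0 by simp
  qed (use Rt KC R in auto)
  have KRe1: "(KC * R) $$ (a,b) = (\<Sum>c = 0..<n. [:K $$ (a,c):] * R $$ (c,b))" if "a < n" "b < n" for a b
    by (subst mult_entry[OF KC R that]) (use that in \<open>auto simp: KC_def intro!: sum.cong\<close>)
  have KRe2: "(KC * R) $$ (a,b) = (\<Sum>c = 0..<n. R $$ (c,a) * [:K $$ (c,b):])" if "a < n" "b < n" for a b
    unfolding KR by (subst mult_entry[OF Rt KC that]) (use that R in \<open>auto simp: KC_def intro!: sum.cong\<close>)
  have J: "f dvd R $$ (i,j) * R $$ (k,l) - R $$ (k,j) * R $$ (i,l)"
    if "i < n" "k < n" "j < n" "l < n" for i j k l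
    using jacobi2[OF M _ that] f0 unfolding detM R_def by simp
  have tr: "f' = (\<Sum>c = 0..<n. R $$ (c,c))"
    unfolding f'_def f_def R_def M_def trace_adj_cpm[OF A] ..
  have D1: "f dvd (\<Sum>c = 0..<n. R $$ (a,c) * R $$ (c,b)) - f' * R $$ (a,b)" if "a < n" "b < n" for a b
  proof -
    have "(\<Sum>c = 0..<n. R $$ (a,c) * R $$ (c,b)) - f' * R $$ (a,b)
        = (\<Sum>c = 0..<n. R $$ (a,c) * R $$ (c,b) - R $$ (c,c) * R $$ (a,b))"
      unfolding tr by (simp add: sum_subtractf sum_distrib_right)
    also have "f dvd \<dots>" using that by (intro dvd_sum J) auto
    finally show ?thesis .
  qed
  have main: "f dvd f' * (KC * R) $$ (a,b)" if a: "a < n" and b: "b < n" for a b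
  proof -
    define N where "N = (\<Sum>c = 0..<n. (KC * R) $$ (a,c) * R $$ (c,b))"
    have "N = (\<Sum>c = 0..<n. \<Sum>d = 0..<n. [:K $$ (a,d):] * (R $$ (d,c) * R $$ (c,b)))"
      unfolding N_def using a by (simp add: KRe1 sum_distrib_right mult.assoc)
    also have "\<dots> = (\<Sum>d = 0..<n. \<Sum>c = 0..<n. [:K $$ (a,d):] * (R $$ (d,c) * R $$ (c,b)))"
      by (rule sum.swap)
    also have "\<dots> = (\<Sum>d = 0..<n. [:K $$ (a,d):] * (\<Sum>c = 0..<n. R $$ (d,c) * R $$ (c,b)))"
      by (simp add: sum_distrib_left)
    finally have N1: "N = (\<Sum>d = 0..<n. [:K $$ (a,d):] * (\<Sum>c = 0..<n. R $$ (d,c) * R $$ (c,b)))" .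
    have "N - f' * (KC * R) $$ (a,b) = (\<Sum>d = 0..<n. [:K $$ (a,d):] * ((\<Sum>c = 0..<n. R $$ (d,c) * R $$ (c,b)) - f' * R $$ (d,b)))"
      unfolding N1 KRe1[OF a b] by (simp add: right_diff_distrib sum_subtractf sum_distrib_left mult.left_commute)
    also have "f dvd \<dots>" using b by (intro dvd_sum dvd_mult D1) auto
    finally have d1: "f dvd N - f' * (KC * R) $$ (a,b)" .
    have N2: "N = (\<Sum>c = 0..<n. \<Sum>d = 0..<n. [:K $$ (d,c):] * (R $$ (d,a) * R $$ (c,b)))"
      unfolding N_def using a b by (simp add: KRe2 sum_distrib_right mult.assoc mult.left_commute)
    define T' where "T' = (\<Sum>c = 0..<n. \<Sum>d = 0..<n. [:K $$ (d,c):] * (R $$ (c,a) * R $$ (d,b)))"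
    have "T' = (\<Sum>d = 0..<n. \<Sum>c = 0..<n. [:K $$ (c,d):] * (R $$ (d,a) * R $$ (c,b)))"
      unfolding T'_def by (rule refl)
    also have "\<dots> = (\<Sum>d = 0..<n. \<Sum>c = 0..<n. - ([:K $$ (d,c):] * (R $$ (d,a) * R $$ (c,b))))"
    proof (intro sum.cong refl)
      fix d c assume "d \<in> {0..<n}" "c \<in> {0..<n}"
      thus "[:K $$ (c,d):] * (R $$ (d,a) * R $$ (c,b)) = - ([:K $$ (d,c):] * (R $$ (d,a) * R $$ (c,b)))"
        using anti[of d c] by simp
    qed
    also have "\<dots> = - (\<Sum>d = 0..<n. \<Sum>c = 0..<n. [:K $$ (d,c):] * (R $$ (d,a) * R $$ (c,b)))"
      by (simp only: sum_negf)
    also have "\<dots> = - N" unfolding N2 by (subst sum.swap, rule refl)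
    finally have T'N: "T' = - N" .
    have "N - T' = (\<Sum>c = 0..<n. \<Sum>d = 0..<n. [:K $$ (d,c):] * (R $$ (d,a) * R $$ (c,b) - R $$ (c,a) * R $$ (d,b)))"
      unfolding N2 T'_def by (simp add: right_diff_distrib sum_subtractf)
    also have "f dvd \<dots>" using a b by (intro dvd_sum dvd_mult J) auto
    finally have "f dvd N + N" using T'N by simp
    hence "f dvd Polynomial.smult (1/2) (N + N)" by (rule dvd_smult)
    moreover have "Polynomial.smult (1/2) (N + N) = Polynomial.smult (1/2 + 1/2) N"
      by (simp only: smult_add_right smult_add_left)
    hence "Polynomial.smult (1/2) (N + N) = N" by simp
    ultimately have d2: "f dvd N" by simp
    have "f' * (KC * R) $$ (a,b) = N - (N - f' * (KC * R) $$ (a,b))" by simp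
    also have "f dvd \<dots>" using d2 d1 by (rule dvd_diff)
    finally show ?thesis .
  qed
  have dKR: "f dvd (KC * R) $$ (a,b)" if "a < n" "b < n" for a b
  proof -
    have cp: "coprime f f'" using sep unfolding f_def f'_def .
    show ?thesis using main[OF that] by (rule coprime_poly_dvd[OF cp])
  qed
  define Z where "Z a b = (KC * R) $$ (a,b) div f" for a b
  have KRZ: "(KC * R) $$ (a,b) = f * Z a b" if "a < n" "b < n" for a b
    unfolding Z_def using dKR[OF that] by simp
  have KRM: "(KC * R) * M = f \<cdot>\<^sub>m KC"
    using assoc_mult_mat[OF KC R M] RM mult_smult_distrib[OF KC one_carrier_mat, of f] KC by simp
  have ZM: "(\<Sum>c = 0..<n. Z a c * M $$ (c,b)) = [:K $$ (a,b):]" if a: "a < n" and b: "b < n" for a b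
  proof -
    have "f * (\<Sum>c = 0..<n. Z a c * M $$ (c,b)) = (\<Sum>c = 0..<n. (KC * R) $$ (a,c) * M $$ (c,b))"
      using a by (simp add: KRZ sum_distrib_left mult.assoc)
    also have "\<dots> = ((KC * R) * M) $$ (a,b)"
      by (rule mult_entry[OF mult_carrier_mat[OF KC R] M a b, symmetric])
    also have "\<dots> = f * [:K $$ (a,b):]" unfolding KRM using a b KC by (simp add: KC_def)
    finally have e: "f * (\<Sum>c = 0..<n. Z a c * M $$ (c,b)) = f * [:K $$ (a,b):]" .
    show ?thesis using e f0 mult_left_cancel by blast
  qed
  have coeffrel: "coeff (Z a b) d = (\<Sum>c = 0..<n. coeff (Z a c) (Suc d) * A $$ (c,b))"
    if a: "a < n" and b: "b < n" for a b d
  proof -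
    have "(\<Sum>c = 0..<n. Z a c * M $$ (c,b))
       = (\<Sum>c = 0..<n. (if c = b then pCons 0 (Z a c) else 0) - Polynomial.smult (A $$ (c,b)) (Z a c))"
      using b by (intro sum.cong refl) (auto simp: Ment algebra_simps mult_pCons_right)
    also have "\<dots> = pCons 0 (Z a b) - (\<Sum>c = 0..<n. Polynomial.smult (A $$ (c,b)) (Z a c))"
      using b by (simp add: sum_subtractf)
    finally have "pCons 0 (Z a b) - (\<Sum>c = 0..<n. Polynomial.smult (A $$ (c,b)) (Z a c)) = [:K $$ (a,b):]"
      using ZM[OF a b] by simp
    from arg_cong[OF this, of "\<lambda>p. coeff p (Suc d)"]
    show ?thesis by (simp add: coeff_sum mult.commute)
  qed
  define D where "D = Suc (\<Sum>a = 0..<n. \<Sum>b = 0..<n. degree (Z a b))"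
  have degD: "degree (Z a b) < D" if "a < n" "b < n" for a b
  proof -
    have "degree (Z a b) \<le> (\<Sum>b = 0..<n. degree (Z a b))"
      using that by (intro member_le_sum) auto
    also have "\<dots> \<le> (\<Sum>a = 0..<n. \<Sum>b = 0..<n. degree (Z a b))"
      using that by (intro member_le_sum[of a _ "\<lambda>a. \<Sum>b = 0..<n. degree (Z a b)"]) auto
    finally show ?thesis unfolding D_def by simp
  qed
  have zc: "\<forall>a<n. \<forall>b<n. coeff (Z a b) (D - j) = 0" for j
  proof (induction j)
    case 0
    show ?case using degD by (auto intro!: coeff_eq_0)
  next
    case (Suc j)
    show ?case
    proof (cases "j < D")
      case True
      hence eq: "D - j = Suc (D - Suc j)" by simp
      show ?thesis
      proof (intro allI impI)
        fix a b assume a: "a < n" and b: "b < n"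
        show "coeff (Z a b) (D - Suc j) = 0"
          unfolding coeffrel[OF a b] using Suc eq a by (auto intro!: sum.neutral)
      qed
    next
      case False
      hence "D - Suc j = D - j" by simp
      thus ?thesis using Suc by simp
    qed
  qed
  have Z0: "Z a b = 0" if "a < n" "b < n" for a b
  proof (rule poly_eqI)
    fix d
    show "coeff (Z a b) d = coeff 0 d"
    proof (cases "d \<le> D")
      case True
      hence "d = D - (D - d)" by simp
      thus ?thesis using zc[of "D - d"] that by (metis coeff_0)
    next
      case False
      thus ?thesis using degD[OF that] by (simp add: coeff_eq_0)
    qed
  qed
  have "[:K $$ (i,j):] = 0" using ZM[OF ij] Z0 ij by simp
  thus ?thesis by simp
qed




lemma qc_hom: assumes "quad_conj \<sigma>" shows "field_hom \<sigma>"
proof -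
  have add: "\<And>x y. \<sigma> (x + y) = \<sigma> x + \<sigma> y" and mul: "\<And>x y. \<sigma> (x * y) = \<sigma> x * \<sigma> y"
    and one: "\<sigma> 1 = 1" using assms unfolding quad_conj_def by auto
  have "\<sigma> 0 = \<sigma> 0 + \<sigma> 0" using add[of 0 0] by simp
  hence zero: "\<sigma> 0 = 0" by (metis add_cancel_right_right)
  show ?thesis by (unfold_locales, auto simp: add mul one zero)
qed

lemma qc_invol: "quad_conj \<sigma> \<Longrightarrow> \<sigma> (\<sigma> x) = x" unfolding quad_conj_def by auto

lemma minv_ex: assumes "A \<in> GLn n"
  shows "minv n A \<in> carrier_mat n n \<and> A * minv n A = 1\<^sub>m n \<and> minv n A * A = 1\<^sub>m n"
proof -
  from assms have A: "A \<in> carrier_mat n n" and inv: "invertible_mat A" unfolding GLn_def by auto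
  from inv obtain B where AB: "A * B = 1\<^sub>m (dim_row A)" and BA: "B * A = 1\<^sub>m (dim_row B)"
    unfolding invertible_mat_def inverts_mat_def by auto
  have "dim_col B = n" using arg_cong[OF AB, of dim_col] A by simp
  moreover have "dim_row B = n" using arg_cong[OF BA, of dim_col] A by simp
  ultimately have B: "B \<in> carrier_mat n n" by auto
  have P: "B \<in> carrier_mat n n \<and> A * B = 1\<^sub>m n \<and> B * A = 1\<^sub>m n" using AB BA A B by auto
  have U: "C = B" if "C \<in> carrier_mat n n \<and> A * C = 1\<^sub>m n \<and> C * A = 1\<^sub>m n" for C
  proof -
    have "C = C * (A * B)" using that P right_mult_one_mat[of C n n] by simp
    also have "\<dots> = (C * A) * B" using that A B by (intro assoc_mult_mat[symmetric]) auto
    also have "\<dots> = B" using that B left_mult_one_mat[of B n n] by (simp del: assoc_mult_mat)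
    finally show ?thesis .
  qed
  have "minv n A = B" unfolding minv_def using P U by (rule the_equality)
  thus ?thesis using P by simp
qed

lemma GLn_I: assumes A: "A \<in> carrier_mat n n" and B: "B \<in> carrier_mat n n" and AB: "A * B = 1\<^sub>m n"
  shows "(A :: 'a::field mat) \<in> GLn n"
proof -
  have "B * A = 1\<^sub>m n" by (rule mat_mult_left_right_inverse[OF A B AB])
  thus ?thesis unfolding GLn_def invertible_mat_def inverts_mat_def square_mat.simps using A B AB by auto
qed

lemma GLn_carrier: "A \<in> GLn n \<Longrightarrow> A \<in> carrier_mat n n" unfolding GLn_def by auto

lemma GLn_mult: assumes A: "A \<in> GLn n" and B: "B \<in> GLn n" shows "A * B \<in> GLn n"
proof -
  note a = minv_ex[OF A] and b = minv_ex[OF B]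
  have Ac: "A \<in> carrier_mat n n" and Bc: "B \<in> carrier_mat n n" using A B by (auto dest: GLn_carrier)
  have Ai: "minv n A \<in> carrier_mat n n" and Bi: "minv n B \<in> carrier_mat n n" using a b by auto
  have "(A * B) * (minv n B * minv n A) = A * ((B * minv n B) * minv n A)"
    using Ac Bc Ai Bi by (simp add: assoc_mult_mat[of _ n n _ n _ n])
  also have "\<dots> = 1\<^sub>m n" using Ac a b left_mult_one_mat[OF Ai] by simp
  finally show ?thesis using Ac Bc a b by (intro GLn_I[of _ n "minv n B * minv n A"]) auto
qed

lemma GLn_det: assumes A: "(A :: 'a::field mat) \<in> carrier_mat n n" and d: "det A \<noteq> 0" shows "A \<in> GLn n"
proof -
  have "A * ((1 / det A) \<cdot>\<^sub>m adj_mat A) = (1 / det A) \<cdot>\<^sub>m (A * adj_mat A)"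
    using adj_mat[OF A] A by (simp add: mult_smult_distrib)
  also have "\<dots> = 1\<^sub>m n" using adj_mat[OF A] d by (auto intro!: eq_matI)
  finally show ?thesis using A adj_mat[OF A] by (intro GLn_I[of _ n "(1 / det A) \<cdot>\<^sub>m adj_mat A"]) auto
qed



lemma sum_delta_r: "finite A \<Longrightarrow> (\<Sum>c\<in>A. f c * (if c = j then 1 else (0::'a::semiring_1))) = (if j \<in> A then f j else 0)"
proof -
  assume A: "finite A"
  have "(\<Sum>c\<in>A. f c * (if c = j then 1 else (0::'a))) = (\<Sum>c\<in>A. if c = j then f c else 0)"
    by (rule sum.cong) auto
  thus ?thesis using A by (simp add: sum.delta')
qed
lemma sum_delta_l: "finite A \<Longrightarrow> (\<Sum>c\<in>A. (if c = j then 1 else (0::'a::semiring_1)) * f c) = (if j \<in> A then f j else 0)"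
proof -
  assume A: "finite A"
  have "(\<Sum>c\<in>A. (if c = j then 1 else (0::'a)) * f c) = (\<Sum>c\<in>A. if c = j then f c else 0)"
    by (rule sum.cong) auto
  thus ?thesis using A by (simp add: sum.delta')
qed

definition Bf :: "('a::field \<Rightarrow> 'a) \<Rightarrow> 'a mat \<Rightarrow> nat \<Rightarrow> (nat \<Rightarrow> 'a) \<Rightarrow> (nat \<Rightarrow> 'a) \<Rightarrow> 'a" where
  "Bf \<sigma> H N u v = (\<Sum>r = 0..<N. \<Sum>c = 0..<N. \<sigma> (u r) * H $$ (r,c) * v c)"

definition ev :: "nat \<Rightarrow> nat \<Rightarrow> 'a::field" where "ev i = (\<lambda>r. if r = i then 1 else 0)"

context
  fixes \<sigma> :: "'a::field_char_0 \<Rightarrow> 'a"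
  assumes qc: "quad_conj \<sigma>"
begin

interpretation s: field_hom \<sigma> by (rule qc_hom[OF qc])

lemma Bf_add_right: "Bf \<sigma> H N u (\<lambda>i. v i + w i) = Bf \<sigma> H N u v + Bf \<sigma> H N u w"
  unfolding Bf_def by (simp add: distrib_left sum.distrib)

lemma Bf_smult_right: "Bf \<sigma> H N u (\<lambda>i. k * v i) = k * Bf \<sigma> H N u v"
  unfolding Bf_def by (simp add: sum_distrib_left ac_simps)

lemma Bf_add_left: "Bf \<sigma> H N (\<lambda>i. u i + w i) v = Bf \<sigma> H N u v + Bf \<sigma> H N w v"
  unfolding Bf_def by (simp add: s.hom_add distrib_right sum.distrib)

lemma Bf_smult_left: "Bf \<sigma> H N (\<lambda>i. k * u i) v = \<sigma> k * Bf \<sigma> H N u v"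
  unfolding Bf_def by (simp add: s.hom_mult sum_distrib_left ac_simps)

lemma Bf_ev: "i < N \<Longrightarrow> j < N \<Longrightarrow> Bf \<sigma> H N (ev i) (ev j) = H $$ (i,j)"
proof -
  assume ij: "i < N" "j < N"
  have "\<And>r. (\<Sum>c = 0..<N. \<sigma> (ev i r) * H $$ (r,c) * ev j c) = \<sigma> (ev i r) * H $$ (r,j)"
    using ij unfolding ev_def by (simp add: sum_delta_r)
  hence "Bf \<sigma> H N (ev i) (ev j) = (\<Sum>r = 0..<N. \<sigma> (ev i r) * H $$ (r,j))" unfolding Bf_def by simp
  also have "\<dots> = (\<Sum>r = 0..<N. ev i r * H $$ (r,j))"
    by (rule sum.cong, auto simp: ev_def)
  also have "\<dots> = H $$ (i,j)" using ij unfolding ev_def by (simp add: sum_delta_l)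
  finally show ?thesis .
qed

lemma Bf_expand: "Bf \<sigma> H N (\<lambda>r. u r + c * w r) (\<lambda>r. u r + c * w r)
  = Bf \<sigma> H N u u + c * Bf \<sigma> H N u w + \<sigma> c * Bf \<sigma> H N w u + \<sigma> c * c * Bf \<sigma> H N w w"
  by (simp add: Bf_add_left Bf_add_right Bf_smult_left Bf_smult_right algebra_simps)

lemma exists_aniso:
  assumes skew: "\<And>i j. i < N \<Longrightarrow> j < N \<Longrightarrow> \<sigma> (H $$ (j,i)) = - H $$ (i,j)"
    and nz: "i0 < N" "j0 < N" "H $$ (i0,j0) \<noteq> 0"
  shows "\<exists>x. x 0 \<noteq> 0 \<and> Bf \<sigma> H N x x \<noteq> 0"
proof -
  have N: "0 < N" using nz by auto
  have "\<exists>y. Bf \<sigma> H N y y \<noteq> 0"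
  proof (cases "\<exists>i<N. H $$ (i,i) \<noteq> 0")
    case True
    then obtain i where "i < N" "H $$ (i,i) \<noteq> 0" by auto
    thus ?thesis using Bf_ev[of i N i H] by (intro exI[of _ "ev i"]) auto
  next
    case False
    hence diag: "\<And>i. i < N \<Longrightarrow> H $$ (i,i) = 0" by auto
    obtain \<epsilon> where eps: "\<sigma> \<epsilon> \<noteq> \<epsilon>" using qc unfolding quad_conj_def by auto
    define h where "h = H $$ (i0,j0)"
    have hji: "H $$ (j0,i0) = - \<sigma> h" using skew[OF nz(2) nz(1)] unfolding h_def by simp
    have val: "Bf \<sigma> H N (\<lambda>r. ev i0 r + c * ev j0 r) (\<lambda>r. ev i0 r + c * ev j0 r) = c * h - \<sigma> c * \<sigma> h" for c
      unfolding Bf_expand using nz diag hji by (simp add: Bf_ev h_def)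
    show ?thesis
    proof (rule ccontr)
      assume "\<not> ?thesis"
      hence z: "\<And>y. Bf \<sigma> H N y y = 0" by auto
      have 1: "h = \<sigma> h" using z[of "\<lambda>r. ev i0 r + 1 * ev j0 r"] val[of 1] by simp
      have 2: "\<epsilon> * h = \<sigma> \<epsilon> * \<sigma> h" using z[of "\<lambda>r. ev i0 r + \<epsilon> * ev j0 r"] val[of \<epsilon>] by simp
      have "(\<epsilon> - \<sigma> \<epsilon>) * h = 0" using 1 2 by (simp add: algebra_simps)
      thus False using eps nz(3) unfolding h_def by simp
    qed
  qed
  then obtain y where y: "Bf \<sigma> H N y y \<noteq> 0" by auto
  show ?thesis
  proof (cases "y 0 = 0")
    case False thus ?thesis using y by auto
  next
    case True
    define q where "q = (\<lambda>x. Bf \<sigma> H N x x)"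
    have ev00: "ev 0 0 = (1::'a)" by (simp add: ev_def)
    have s1: "\<sigma> 1 = 1" and sm1: "\<sigma> (-1) = -1" by (simp_all add: s.hom_uminus)
    have qp: "q (\<lambda>r. y r + 1 * ev 0 r) = q y + Bf \<sigma> H N y (ev 0) + Bf \<sigma> H N (ev 0) y + q (ev 0)"
      unfolding q_def Bf_expand s1 by simp
    have qm: "q (\<lambda>r. y r + (-1) * ev 0 r) = q y - Bf \<sigma> H N y (ev 0) - Bf \<sigma> H N (ev 0) y + q (ev 0)"
      unfolding q_def Bf_expand sm1 by simp
    show ?thesis
    proof (cases "q (\<lambda>r. y r + 1 * ev 0 r) \<noteq> 0")
      case True
      thus ?thesis using \<open>y 0 = 0\<close> ev00 unfolding q_def by (intro exI[of _ "\<lambda>r. y r + 1 * ev 0 r"]) auto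
    next
      case False
      note F1 = this
      show ?thesis
      proof (cases "q (\<lambda>r. y r + (-1) * ev 0 r) \<noteq> 0")
        case True
        thus ?thesis using \<open>y 0 = 0\<close> ev00 unfolding q_def by (intro exI[of _ "\<lambda>r. y r + (-1) * ev 0 r"]) auto
      next
        case False
        have "q y + q y + q (ev 0) + q (ev 0) = 0" using F1 False qp qm by (simp add: algebra_simps)
        hence "2 * (q y + q (ev 0)) = 0" by (simp add: algebra_simps)
        hence "q y + q (ev 0) = 0" by (metis mult_eq_0_iff zero_neq_numeral)
        hence "q (ev 0) = - q y" by (simp add: add_eq_0_iff2 add.commute)
        hence "q (ev 0) \<noteq> 0" using y unfolding q_def by simp
        thus ?thesis unfolding q_def using ev00 by (intro exI[of _ "ev 0"]) auto
      qed
    qed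
  qed
qed

lemma mstar_carrier: "A \<in> carrier_mat n m \<Longrightarrow> mstar \<sigma> A \<in> carrier_mat m n"
  unfolding mstar_def by simp

lemma mstar_index: "A \<in> carrier_mat n m \<Longrightarrow> i < m \<Longrightarrow> j < n \<Longrightarrow> mstar \<sigma> A $$ (i,j) = \<sigma> (A $$ (j,i))"
  unfolding mstar_def by simp

lemma mstar_mult: "A \<in> carrier_mat n m \<Longrightarrow> B \<in> carrier_mat m k \<Longrightarrow> mstar \<sigma> (A * B) = mstar \<sigma> B * mstar \<sigma> A"
  unfolding mstar_def
  by (subst s.mat_hom_mult[of A n m B k], assumption+, rule transpose_mult, auto)

lemma mstar_mstar: "mstar \<sigma> (mstar \<sigma> A) = A"
  unfolding mstar_def by (rule eq_matI, auto simp: qc_invol[OF qc])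

lemma mstar_uminus: "mstar \<sigma> (- A) = - mstar \<sigma> A"
  unfolding mstar_def by (rule eq_matI, auto simp: s.hom_uminus)

lemma mstar_one: "mstar \<sigma> (1\<^sub>m n) = 1\<^sub>m n"
  unfolding mstar_def by (rule eq_matI, auto)

end

lemma mult3_entry: "X \<in> carrier_mat N N \<Longrightarrow> Y \<in> carrier_mat N N \<Longrightarrow> Z \<in> carrier_mat N N \<Longrightarrow> i < N \<Longrightarrow> j < N \<Longrightarrow>
  (X * Y * Z) $$ (i,j) = (\<Sum>r = 0..<N. \<Sum>s = 0..<N. X $$ (i,r) * Y $$ (r,s) * Z $$ (s,j))"
proof -
  assume X: "X \<in> carrier_mat N N" and Y: "Y \<in> carrier_mat N N" and Z: "Z \<in> carrier_mat N N" and ij: "i < N" "j < N"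
  have "(X * Y * Z) $$ (i,j) = (\<Sum>s = 0..<N. (X * Y) $$ (i,s) * Z $$ (s,j))"
    using mult_entry[OF mult_carrier_mat[OF X Y] Z ij] .
  also have "\<dots> = (\<Sum>s = 0..<N. \<Sum>r = 0..<N. X $$ (i,r) * Y $$ (r,s) * Z $$ (s,j))"
    by (rule sum.cong, simp, subst mult_entry[OF X Y], use ij in \<open>auto simp: sum_distrib_right\<close>)
  also have "\<dots> = (\<Sum>r = 0..<N. \<Sum>s = 0..<N. X $$ (i,r) * Y $$ (r,s) * Z $$ (s,j))"
    by (rule sum.swap)
  finally show ?thesis .
qed

lemma D_lemma:
  fixes H :: "'a::field_char_0 mat"
  assumes qc: "quad_conj \<sigma>" and H: "H \<in> carrier_mat n n" and sk: "mstar \<sigma> H = - H"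
  shows "\<exists>P. P \<in> GLn n \<and> transpose_mat (mstar \<sigma> P * H * P) = mstar \<sigma> P * H * P"
  using H sk
proof (induction n arbitrary: H)
  case 0
  have "1\<^sub>m 0 \<in> GLn 0" by (rule GLn_I[of _ 0 "1\<^sub>m 0"]) auto
  moreover have "transpose_mat (mstar \<sigma> (1\<^sub>m 0) * H * 1\<^sub>m 0) = mstar \<sigma> (1\<^sub>m 0) * H * 1\<^sub>m 0"
    by (rule eq_matI) (use 0 in \<open>auto simp: mstar_def\<close>)
  ultimately show ?case by blast
next
  case (Suc n)
  interpret s: field_hom \<sigma> by (rule qc_hom[OF qc])
  define N where "N = Suc n"
  have Hc: "H \<in> carrier_mat N N" using Suc.prems unfolding N_def by simp
  have skew: "\<sigma> (H $$ (j,i)) = - H $$ (i,j)" if "i < N" "j < N" for i j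
    using arg_cong[OF Suc.prems(2), of "\<lambda>X. X $$ (i,j)"] mstar_index[OF qc Hc that] that Hc by simp
  show ?case
  proof (cases "\<forall>i<N. \<forall>j<N. H $$ (i,j) = 0")
    case True
    have H0: "H = 0\<^sub>m N N" by (rule eq_matI) (use True Hc in auto)
    have "1\<^sub>m N \<in> GLn N" by (rule GLn_I[of _ N "1\<^sub>m N"]) auto
    moreover have "transpose_mat (mstar \<sigma> (1\<^sub>m N) * H * 1\<^sub>m N) = mstar \<sigma> (1\<^sub>m N) * H * 1\<^sub>m N"
      unfolding mstar_one[OF qc] H0 by simp
    ultimately show ?thesis unfolding N_def by blast
  next
    case False
    then obtain i0 j0 where nz: "i0 < N" "j0 < N" "H $$ (i0,j0) \<noteq> 0" by auto
    obtain x where x0: "x 0 \<noteq> 0" and qx: "Bf \<sigma> H N x x \<noteq> 0"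
      using exists_aniso[OF qc skew nz] by blast
    define T where "T = mat N N (\<lambda>(r,c). if c = 0 then x r else if r = c then 1 else 0)"
    have Tc: "T \<in> carrier_mat N N" unfolding T_def by simp
    have "det T = (\<Prod>i = 0..<N. T $$ (i,i))"
      using det_lower_triangular[OF _ Tc] Tc unfolding prod_list_diag_prod
      by (simp add: T_def)
    also have "\<dots> = x 0"
      by (simp add: N_def prod.atLeast0_lessThan_Suc_shift T_def del: prod.op_ivl_Suc)
    finally have TGL: "T \<in> GLn N" using x0 by (intro GLn_det[OF Tc]) auto
    define H1 where "H1 = mstar \<sigma> T * H * T"
    have H1c: "H1 \<in> carrier_mat N N" unfolding H1_def using Tc Hc mstar_carrier[OF qc Tc] by simp
    have sk1: "mstar \<sigma> H1 = - H1"
      unfolding H1_def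
      using Tc Hc mstar_carrier[OF qc Tc] mstar_mult[OF qc, of "mstar \<sigma> T * H" N N T N]
        mstar_mult[OF qc, of "mstar \<sigma> T" N N H N] mstar_mstar[OF qc] Suc.prems(2) mstar_uminus[OF qc]
      by simp
    define h where "h = H1 $$ (0,0)"
    have N0: "0 < N" unfolding N_def by simp
    have Tr0: "T $$ (r,0) = x r" if "r < N" for r unfolding T_def using that N0 by simp
    have hB: "h = Bf \<sigma> H N x x"
      unfolding h_def H1_def Bf_def mult3_entry[OF mstar_carrier[OF qc Tc] Hc Tc N0 N0]
      by (intro sum.cong refl, simp add: mstar_index[OF qc Tc] N0 Tr0)
    have h0: "h \<noteq> 0" using qx hB by simp
    define E where "E = mat N N (\<lambda>(r,c). if r = c then 1 else if r = 0 then - (H1 $$ (0,c) / h) else 0)"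
    have Ec: "E \<in> carrier_mat N N" unfolding E_def by simp
    have "det E = (\<Prod>i = 0..<N. E $$ (i,i))"
      using det_upper_triangular[OF _ Ec] Ec unfolding prod_list_diag_prod
      by (simp add: E_def upper_triangular_def)
    also have "\<dots> = 1" by (simp add: E_def)
    finally have EGL: "E \<in> GLn N" by (intro GLn_det[OF Ec]) auto
    define H2 where "H2 = mstar \<sigma> E * H1 * E"
    have H2c: "H2 \<in> carrier_mat N N" unfolding H2_def using Ec H1c mstar_carrier[OF qc Ec] by simp
    have sk2: "mstar \<sigma> H2 = - H2"
      unfolding H2_def
      using Ec H1c mstar_carrier[OF qc Ec] mstar_mult[OF qc, of "mstar \<sigma> E * H1" N N E N]
        mstar_mult[OF qc, of "mstar \<sigma> E" N N H1 N] mstar_mstar[OF qc] sk1 mstar_uminus[OF qc]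
      by simp
    have Er0: "E $$ (r,0) = (if r = 0 then 1 else 0)" if "r < N" for r unfolding E_def using that N0 by simp
    have H2row: "H2 $$ (0,c) = (\<Sum>s = 0..<N. H1 $$ (0,s) * E $$ (s,c))" if c: "c < N" for c
    proof -
      have "H2 $$ (0,c) = (\<Sum>r = 0..<N. \<Sum>s = 0..<N. mstar \<sigma> E $$ (0,r) * H1 $$ (r,s) * E $$ (s,c))"
        unfolding H2_def by (rule mult3_entry[OF mstar_carrier[OF qc Ec] H1c Ec N0 c])
      also have "\<dots> = (\<Sum>r = 0..<N. (if r = 0 then 1 else 0) * (\<Sum>s = 0..<N. H1 $$ (r,s) * E $$ (s,c)))"
        by (intro sum.cong refl, simp add: mstar_index[OF qc Ec] N0 Er0 sum_distrib_left ac_simps)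
      also have "\<dots> = (\<Sum>s = 0..<N. H1 $$ (0,s) * E $$ (s,c))"
        using N0 by (simp add: sum_delta_l)
      finally show ?thesis .
    qed
    have H200: "H2 $$ (0,0) = h"
      unfolding H2row[OF N0] using N0 by (simp add: Er0 h_def ac_simps sum_delta_r)
    have H20c: "H2 $$ (0,c) = 0" if c: "0 < c" "c < N" for c
    proof -
      have "(\<Sum>s = 0..<N. H1 $$ (0,s) * E $$ (s,c))
          = (\<Sum>s = 0..<N. (if s = c then H1 $$ (0,c) else 0) + (if s = 0 then H1 $$ (0,0) * - (H1 $$ (0,c) / h) else 0))"
        by (intro sum.cong refl) (use c in \<open>auto simp: E_def\<close>)
      also have "\<dots> = H1 $$ (0,c) + h * - (H1 $$ (0,c) / h)"
        using c N0 by (simp add: sum.distrib h_def)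
      also have "\<dots> = 0" using h0 by simp
      finally show ?thesis unfolding H2row[OF c(2)] .
    qed
    have H2r0: "H2 $$ (r,0) = 0" if r: "0 < r" "r < N" for r
    proof -
      have "\<sigma> (H2 $$ (0,r)) = - H2 $$ (r,0)"
        using arg_cong[OF sk2, of "\<lambda>X. X $$ (r,0)"] mstar_index[OF qc H2c r(2) N0] r N0 H2c by simp
      thus ?thesis using H20c[OF r] by simp
    qed
    define H3 where "H3 = mat n n (\<lambda>(r,c). H2 $$ (Suc r, Suc c))"
    have H3c: "H3 \<in> carrier_mat n n" unfolding H3_def by simp
    have sk3: "mstar \<sigma> H3 = - H3"
    proof (rule eq_matI)
      fix i j assume "i < dim_row (- H3)" "j < dim_col (- H3)"
      hence ij: "i < n" "j < n" using H3c by auto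
      have "mstar \<sigma> H2 $$ (Suc i, Suc j) = (- H2) $$ (Suc i, Suc j)" using sk2 by simp
      thus "mstar \<sigma> H3 $$ (i,j) = (- H3) $$ (i,j)"
        using ij H2c mstar_index[OF qc H2c] mstar_index[OF qc H3c] unfolding N_def by (simp add: H3_def)
    qed (use H3c in \<open>auto simp: mstar_def\<close>)
    obtain P3 where P3GL: "P3 \<in> GLn n" and P3sym: "transpose_mat (mstar \<sigma> P3 * H3 * P3) = mstar \<sigma> P3 * H3 * P3"
      using Suc.IH[OF H3c sk3] by blast
    have P3c: "P3 \<in> carrier_mat n n" using P3GL by (rule GLn_carrier)
    define P3i where "P3i = minv n P3"
    have P3i: "P3i \<in> carrier_mat n n" "P3 * P3i = 1\<^sub>m n" using minv_ex[OF P3GL] unfolding P3i_def by auto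
    define hm where "hm = mat 1 1 (\<lambda>_. h)"
    have hmc: "hm \<in> carrier_mat 1 1" unfolding hm_def by simp
    have H2eq: "H2 = four_block_mat hm (0\<^sub>m 1 n) (0\<^sub>m n 1) H3"
    proof (rule eq_matI)
      fix i j assume "i < dim_row (four_block_mat hm (0\<^sub>m 1 n) (0\<^sub>m n 1) H3)"
        "j < dim_col (four_block_mat hm (0\<^sub>m 1 n) (0\<^sub>m n 1) H3)"
      hence ij: "i < N" "j < N" using hmc H3c unfolding N_def by auto
      show "H2 $$ (i,j) = four_block_mat hm (0\<^sub>m 1 n) (0\<^sub>m n 1) H3 $$ (i,j)"
      proof (cases "i = 0")
        case True
        thus ?thesis using ij hmc H3c H200 H20c by (cases "j = 0") (auto simp: hm_def N_def)
      next
        case False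
        then obtain i' where i': "i = Suc i'" by (cases i) auto
        show ?thesis
        proof (cases "j = 0")
          case True
          thus ?thesis using ij hmc H3c H2r0 False by (auto simp: hm_def N_def)
        next
          case False
          then obtain j' where j': "j = Suc j'" by (cases j) auto
          show ?thesis using ij hmc H3c unfolding i' j' by (auto simp: H3_def N_def)
        qed
      qed
    qed (use H2c hmc H3c N_def in auto)
    define P4 where "P4 = four_block_mat (1\<^sub>m 1) (0\<^sub>m 1 n) (0\<^sub>m n 1) P3"
    have P4c: "P4 \<in> carrier_mat N N" unfolding P4_def N_def using four_block_carrier_mat[OF one_carrier_mat[of 1] P3c, where B="0\<^sub>m 1 n" and C="0\<^sub>m n 1"] by simp
    have P4GL: "P4 \<in> GLn N"
    proof (rule GLn_I[OF P4c, of "four_block_mat (1\<^sub>m 1) (0\<^sub>m 1 n) (0\<^sub>m n 1) P3i"])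
      show "four_block_mat (1\<^sub>m 1) (0\<^sub>m 1 n) (0\<^sub>m n 1) P3i \<in> carrier_mat N N"
        unfolding N_def using four_block_carrier_mat[OF one_carrier_mat[of 1] P3i(1), where B="0\<^sub>m 1 n" and C="0\<^sub>m n 1"] by simp
      show "P4 * four_block_mat (1\<^sub>m 1) (0\<^sub>m 1 n) (0\<^sub>m n 1) P3i = 1\<^sub>m N"
        unfolding P4_def N_def
        by (subst mult_four_block_mat[OF one_carrier_mat[of 1] zero_carrier_mat[of 1 n] zero_carrier_mat[of n 1] P3c
             one_carrier_mat[of 1] zero_carrier_mat[of 1 n] zero_carrier_mat[of n 1] P3i(1)], insert P3c P3i, auto)
    qed
    have stP4: "mstar \<sigma> P4 = four_block_mat (1\<^sub>m 1) (0\<^sub>m 1 n) (0\<^sub>m n 1) (mstar \<sigma> P3)"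
      unfolding P4_def mstar_def using P3c
      by (subst map_four_block_mat[OF one_carrier_mat[of 1] zero_carrier_mat[of 1 n] zero_carrier_mat[of n 1] P3c],
          subst transpose_four_block_mat, auto intro!: cong_four_block_mat eq_matI)
    define D3 where "D3 = mstar \<sigma> P3 * H3 * P3"
    have sP3c: "mstar \<sigma> P3 \<in> carrier_mat n n" using mstar_carrier[OF qc P3c] .
    have M4a: "four_block_mat (1\<^sub>m 1) (0\<^sub>m 1 n) (0\<^sub>m n 1) (mstar \<sigma> P3) * four_block_mat hm (0\<^sub>m 1 n) (0\<^sub>m n 1) H3
       = four_block_mat hm (0\<^sub>m 1 n) (0\<^sub>m n 1) (mstar \<sigma> P3 * H3)"
      by (subst mult_four_block_mat[OF one_carrier_mat[of 1] zero_carrier_mat[of 1 n] zero_carrier_mat[of n 1] sP3c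
             hmc zero_carrier_mat[of 1 n] zero_carrier_mat[of n 1] H3c], insert hmc H3c sP3c, auto)
    have M4b: "four_block_mat hm (0\<^sub>m 1 n) (0\<^sub>m n 1) (mstar \<sigma> P3 * H3) * four_block_mat (1\<^sub>m 1) (0\<^sub>m 1 n) (0\<^sub>m n 1) P3
       = four_block_mat hm (0\<^sub>m 1 n) (0\<^sub>m n 1) D3"
      unfolding D3_def
      by (subst mult_four_block_mat[OF hmc zero_carrier_mat[of 1 n] zero_carrier_mat[of n 1] mult_carrier_mat[OF sP3c H3c]
             one_carrier_mat[of 1] zero_carrier_mat[of 1 n] zero_carrier_mat[of n 1] P3c], insert hmc H3c sP3c P3c, auto)
    have M4: "mstar \<sigma> P4 * H2 * P4 = four_block_mat hm (0\<^sub>m 1 n) (0\<^sub>m n 1) D3"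
      unfolding stP4 H2eq by (subst P4_def, unfold M4a M4b, rule refl)
    have D3c: "D3 \<in> carrier_mat n n" unfolding D3_def using P3c H3c mstar_carrier[OF qc P3c] by simp
    have M4sym: "transpose_mat (mstar \<sigma> P4 * H2 * P4) = mstar \<sigma> P4 * H2 * P4"
      unfolding M4 using hmc D3c P3sym[folded D3_def]
      by (subst transpose_four_block_mat[of _ 1 1 _ n _ n], auto simp: hm_def intro!: cong_four_block_mat eq_matI)
    define P where "P = T * E * P4"
    have PGL: "P \<in> GLn N" unfolding P_def by (intro GLn_mult TGL EGL P4GL)
    have assocN: "\<And>(X::'a mat) Y Z. X \<in> carrier_mat N N \<Longrightarrow> Y \<in> carrier_mat N N \<Longrightarrow> Z \<in> carrier_mat N N \<Longrightarrow> X * Y * Z = X * (Y * Z)"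
      by simp
    have mcN: "\<And>(X::'a mat) Y. X \<in> carrier_mat N N \<Longrightarrow> Y \<in> carrier_mat N N \<Longrightarrow> X * Y \<in> carrier_mat N N" by simp
    have "mstar \<sigma> P * H * P = mstar \<sigma> P4 * H2 * P4"
      unfolding P_def H2_def H1_def
      using Tc Ec P4c Hc mstar_carrier[OF qc Tc] mstar_carrier[OF qc Ec] mstar_carrier[OF qc P4c]
        mstar_mult[OF qc, of "T * E" N N P4 N] mstar_mult[OF qc, of T N N E N]
      by (simp add: assocN mcN)
    thus ?thesis using PGL M4sym unfolding N_def by auto
  qed
qed


theorem mainTheorem12:
  fixes \<sigma> :: "'e::field_char_0 \<Rightarrow> 'e" and n :: nat and \<beta> A' a :: "'e mat"
  assumes "quad_conj \<sigma>"
    and "\<beta> \<in> GLn n" and "skew_hermitian \<sigma> \<beta>"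
    and "A' \<in> h_beta \<sigma> n \<beta>" and "regular_semisimple A'"
    and "a \<in> GLn n" and "A' = mbar \<sigma> a * a"
  shows "\<exists>\<zeta> \<in> GLn n. A' = minv n \<beta> * mstar \<sigma> \<zeta> * \<beta> * \<zeta>"
proof -
  note qc = assms(1)
  interpret s: field_hom \<sigma> by (rule qc_hom[OF qc])
  have inv2: "\<And>x. \<sigma> (\<sigma> x) = x" using qc_invol[OF qc] .
  define cb :: "'e mat \<Rightarrow> 'e mat" where "cb = map_mat \<sigma>"
  define st :: "'e mat \<Rightarrow> 'e mat" where "st = (\<lambda>X. transpose_mat (cb X))"
  have stdef: "mstar \<sigma> X = st X" for X unfolding st_def cb_def mstar_def ..
  have cbdef: "mbar \<sigma> X = cb X" for X unfolding cb_def mbar_def ..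
  have assoc: "\<And>(X::'e mat) Y Z. X \<in> carrier_mat n n \<Longrightarrow> Y \<in> carrier_mat n n \<Longrightarrow> Z \<in> carrier_mat n n \<Longrightarrow> X * Y * Z = X * (Y * Z)"
    by simp
  have mc: "\<And>(X::'e mat) Y. X \<in> carrier_mat n n \<Longrightarrow> Y \<in> carrier_mat n n \<Longrightarrow> X * Y \<in> carrier_mat n n" by simp
  have cbc: "\<And>X. X \<in> carrier_mat n n \<Longrightarrow> cb X \<in> carrier_mat n n" unfolding cb_def by simp
  have stc: "\<And>X. X \<in> carrier_mat n n \<Longrightarrow> st X \<in> carrier_mat n n" unfolding st_def cb_def by simp
  have trc: "\<And>(X::'e mat). X \<in> carrier_mat n n \<Longrightarrow> transpose_mat X \<in> carrier_mat n n" by simp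
  have umc: "\<And>(X::'e mat). X \<in> carrier_mat n n \<Longrightarrow> - X \<in> carrier_mat n n" by simp
  have cbm: "\<And>X Y. X \<in> carrier_mat n n \<Longrightarrow> Y \<in> carrier_mat n n \<Longrightarrow> cb (X * Y) = cb X * cb Y"
    unfolding cb_def by (rule s.mat_hom_mult)
  have cbcb: "\<And>X. cb (cb X) = X" unfolding cb_def by (rule eq_matI, auto simp: inv2)
  have cbtr: "\<And>X. cb (transpose_mat X) = transpose_mat (cb X)" unfolding cb_def by (rule eq_matI, auto)
  have cbum: "\<And>X. cb (- X) = - cb X" unfolding cb_def by (rule eq_matI, auto simp: s.hom_uminus)
  have cbone: "cb (1\<^sub>m n) = 1\<^sub>m n" unfolding cb_def by (rule eq_matI, auto)
  have trm: "\<And>(X::'e mat) Y. X \<in> carrier_mat n n \<Longrightarrow> Y \<in> carrier_mat n n \<Longrightarrow> transpose_mat (X * Y) = transpose_mat Y * transpose_mat X"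
    by (rule transpose_mult, auto)
  have stm: "\<And>X Y. X \<in> carrier_mat n n \<Longrightarrow> Y \<in> carrier_mat n n \<Longrightarrow> st (X * Y) = st Y * st X"
    unfolding st_def using cbm trm cbc by simp
  have stst: "\<And>X. st (st X) = X" unfolding st_def by (simp add: cbtr cbcb)
  have stum: "\<And>X. st (- X) = - st X" unfolding st_def by (simp add: cbum transpose_uminus)
  have dr: "\<And>(X::'e mat). X \<in> carrier_mat n n \<Longrightarrow> dim_row X = n" by simp
  have dc: "\<And>(X::'e mat). X \<in> carrier_mat n n \<Longrightarrow> dim_col X = n" by simp
  have lone: "\<And>(X::'e mat). X \<in> carrier_mat n n \<Longrightarrow> 1\<^sub>m n * X = X" by simp
  have rone: "\<And>(X::'e mat). X \<in> carrier_mat n n \<Longrightarrow> X * 1\<^sub>m n = X" by simp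
  have bGL: "\<beta> \<in> GLn n" using assms(2) .
  have b: "\<beta> \<in> carrier_mat n n" using assms(2) by (rule GLn_carrier)
  define bi where "bi = minv n \<beta>"
  have bi: "bi \<in> carrier_mat n n" and bbi: "\<beta> * bi = 1\<^sub>m n" and bib: "bi * \<beta> = 1\<^sub>m n"
    using minv_ex[OF assms(2)] unfolding bi_def by auto
  have aGL: "a \<in> GLn n" using assms(6) .
  have a: "a \<in> carrier_mat n n" using assms(6) by (rule GLn_carrier)
  have stb: "st \<beta> = - \<beta>" using assms(3) unfolding skew_hermitian_def stdef .
  have A'c: "A' \<in> carrier_mat n n" and stA: "st A' = \<beta> * A' * bi"
    using assms(4) unfolding h_beta_def stdef bi_def by auto
  have A'def: "A' = cb a * a" using assms(7) unfolding cbdef .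
  note C = a b bi A'c
  note CS = cbc stc trc umc mc dr dc
  have e1: "st a * transpose_mat a * \<beta> = \<beta> * A'"
  proof -
    have "st A' = st a * transpose_mat a"
      unfolding A'def stm[OF cbc[OF a] a] unfolding st_def cbcb ..
    hence "st a * transpose_mat a * \<beta> = \<beta> * A' * bi * \<beta>" using stA by simp
    also have "\<dots> = \<beta> * A'" using C by (simp add: CS assoc bib rone)
    finally show ?thesis .
  qed
  have SA: "(transpose_mat a * \<beta>) * A' = transpose_mat A' * (transpose_mat a * \<beta>)"
  proof -
    have "transpose_mat A' = transpose_mat a * st a" unfolding A'def st_def using trm[OF cbc[OF a] a] .
    hence "transpose_mat A' * (transpose_mat a * \<beta>) = transpose_mat a * (st a * transpose_mat a * \<beta>)"
      using C by (simp add: CS assoc)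
    also have "\<dots> = (transpose_mat a * \<beta>) * A'" unfolding e1 using C by (simp add: CS assoc)
    finally show ?thesis by simp
  qed
  define S where "S = transpose_mat a * \<beta>"
  have Sc: "S \<in> carrier_mat n n" unfolding S_def using C by (simp add: CS CS)
  define K where "K = S - transpose_mat S"
  have Kc: "K \<in> carrier_mat n n" unfolding K_def using Sc by (intro minus_carrier_mat) auto
  have StA: "transpose_mat S * A' = transpose_mat A' * transpose_mat S"
  proof -
    have "transpose_mat S * A' = transpose_mat (transpose_mat A' * S)"
      using trm[OF trc[OF A'c] Sc] by simp
    also have "\<dots> = transpose_mat (S * A')" using SA unfolding S_def by simp
    also have "\<dots> = transpose_mat A' * transpose_mat S" using trm[OF Sc A'c] .
    finally show ?thesis .
  qed
  have KA: "K * A' = transpose_mat A' * K"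
  proof -
    have "K * A' = S * A' - transpose_mat S * A'"
      unfolding K_def using Sc A'c by (simp add: minus_mult_distrib_mat[of _ n n _ _ n])
    also have "\<dots> = transpose_mat A' * S - transpose_mat A' * transpose_mat S"
      using SA StA unfolding S_def by simp
    also have "\<dots> = transpose_mat A' * K"
      unfolding K_def using Sc A'c by (simp add: mult_minus_distrib_mat[of _ n n _ n])
    finally show ?thesis .
  qed
  have K0: "K $$ (i,j) = 0" if ij: "i < n" "j < n" for i j
  proof (rule K_zero[OF A'c Kc _ _ _ ij])
    fix i j assume "i < n" "j < n"
    thus "K $$ (j,i) = - K $$ (i,j)" unfolding K_def using Sc by simp
  next
    fix i j assume ij: "i < n" "j < n"
    have "(K * A') $$ (i,j) = (transpose_mat A' * K) $$ (i,j)" using KA by simp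
    thus "(\<Sum>c = 0..<n. K $$ (i,c) * A' $$ (c,j)) = (\<Sum>c = 0..<n. A' $$ (c,i) * K $$ (c,j))"
      unfolding mult_entry[OF Kc A'c ij] mult_entry[OF trc[OF A'c] Kc ij] using ij A'c by simp
  next
    show "coprime (char_poly A') (pderiv (char_poly A'))"
      using assms(5) unfolding regular_semisimple_def .
  qed
  have symS: "transpose_mat S = S"
  proof (rule eq_matI)
    fix i j assume "i < dim_row S" "j < dim_col S"
    hence ij: "i < n" "j < n" using Sc by auto
    show "transpose_mat S $$ (i,j) = S $$ (i,j)" using K0[OF ij] ij Sc unfolding K_def by simp
  qed (use Sc in auto)
  have sym: "transpose_mat \<beta> * a = transpose_mat a * \<beta>"
    using symS unfolding S_def using trm[OF trc[OF a] b] by simp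
  obtain P where PGL: "P \<in> GLn n" and Dsym0: "transpose_mat (st P * \<beta> * P) = st P * \<beta> * P"
    using D_lemma[OF qc b] stb unfolding stdef by blast
  define Dm where "Dm = st P * \<beta> * P"
  have Dsym: "transpose_mat Dm = Dm" using Dsym0 unfolding Dm_def .
  have P: "P \<in> carrier_mat n n" using PGL by (rule GLn_carrier)
  define Pi where "Pi = minv n P"
  have Pi: "Pi \<in> carrier_mat n n" and PPi: "P * Pi = 1\<^sub>m n" and PiP: "Pi * P = 1\<^sub>m n"
    using minv_ex[OF PGL] unfolding Pi_def by auto
  define Qi where "Qi = cb Pi"
  have Qi: "Qi \<in> carrier_mat n n" unfolding Qi_def using cbc[OF Pi] .
  have QiGL: "Qi \<in> GLn n"
  proof (rule GLn_I[OF Qi cbc[OF P]])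
    show "Qi * cb P = 1\<^sub>m n" unfolding Qi_def using cbm[OF Pi P, symmetric] PiP cbone by simp
  qed
  define \<zeta> where "\<zeta> = P * Qi * a"
  have zGL: "\<zeta> \<in> GLn n" unfolding \<zeta>_def by (intro GLn_mult PGL QiGL aGL)
  have Dmc: "Dm \<in> carrier_mat n n" unfolding Dm_def by (intro mc stc P b)
  have stDm: "st Dm = - Dm"
  proof -
    have "st Dm = st P * st \<beta> * st (st P)" unfolding Dm_def using C P by (simp add: CS stm assoc)
    also have "\<dots> = - Dm" unfolding stb stst Dm_def
      using uminus_mult_right_mat[of "st P" "\<beta>"] uminus_mult_left_mat[of "st P * \<beta>" P] C P
      by (simp add: dc[OF stc[OF P]] dr[OF b])
    finally show ?thesis .
  qed
  have cbDm: "cb Dm = - Dm"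
  proof -
    have "cb Dm = transpose_mat (transpose_mat (cb Dm))" by simp
    also have "\<dots> = transpose_mat (- Dm)" using stDm unfolding st_def by simp
    also have "\<dots> = - Dm" using Dsym by (simp add: transpose_uminus)
    finally show ?thesis .
  qed
  have st1: "st (1\<^sub>m n) = 1\<^sub>m n" unfolding st_def cbone by simp
  have brep: "\<beta> = st Pi * Dm * Pi"
  proof -
    have "st Pi * Dm * Pi = (st Pi * st P) * \<beta> * (P * Pi)" unfolding Dm_def using C P Pi by (simp add: CS assoc)
    also have "\<dots> = \<beta>" unfolding PPi stm[OF P Pi, symmetric] st1 using C by (simp add: CS CS)
    finally show ?thesis by simp
  qed
  have C1: "st Qi * Dm * Qi = - cb \<beta>"
  proof -
    have "cb \<beta> = cb (st Pi * Dm * Pi)" by (rule arg_cong[OF brep])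
    also have "\<dots> = cb (st Pi) * cb Dm * cb Pi"
      using cbm[OF mc[OF stc[OF Pi] Dmc] Pi] cbm[OF stc[OF Pi] Dmc] by simp
    also have "cb (st Pi) = st Qi" unfolding st_def Qi_def by (simp add: cbtr)
    finally show ?thesis unfolding cbDm Qi_def[symmetric] using C Qi Dmc by (simp add: CS CS)
  qed
  have C2: "st a * cb \<beta> = - (\<beta> * cb a)"
  proof -
    have "cb (transpose_mat \<beta> * a) = cb (transpose_mat a * \<beta>)" using sym by simp
    hence "st \<beta> * cb a = st a * cb \<beta>" unfolding st_def using C by (simp add: CS cbm cbtr)
    thus ?thesis unfolding stb using C by (simp add: CS CS)
  qed
  have key: "st \<zeta> * \<beta> * \<zeta> = \<beta> * A'"
  proof -
    have "st \<zeta> * \<beta> * \<zeta> = st a * (st Qi * (st P * \<beta> * P) * Qi) * a"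
      unfolding \<zeta>_def using C P Qi by (simp add: CS stm assoc)
    also have "\<dots> = st a * (- cb \<beta>) * a" unfolding Dm_def[symmetric] C1 ..
    also have "\<dots> = - (st a * cb \<beta>) * a" using C by (simp add: CS CS)
    also have "\<dots> = \<beta> * cb a * a" unfolding C2 using C by (simp add: CS CS)
    also have "\<dots> = \<beta> * A'" unfolding A'def using C by (simp add: CS assoc)
    finally show ?thesis .
  qed
  have "minv n \<beta> * mstar \<sigma> \<zeta> * \<beta> * \<zeta> = bi * (st \<zeta> * \<beta> * \<zeta>)"
    unfolding stdef bi_def[symmetric] using C zGL[THEN GLn_carrier] by (simp add: CS assoc)
  also have "\<dots> = A'" unfolding key using C by (simp add: CS assoc[symmetric] bib)
  finally show ?thesis using zGL by auto
qed


end
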